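(* For every even positive integer $n$, there exist a binary NFA with $n$ states and a binary DFA with $n$ states such that there is a tower of height $n^2-n+1$ between their languages and there is no infinite tower between their languages.
   Context: Binary means over a two-letter alphabet. For strings $v=a_1\cdots a_k$ and $w$, $v\preccurlyeq w$ if $w\in\Sigma^*a_1\Sigma^*a_2\Sigma^*\cdots\Sigma^*a_k\Sigma^*$. A sequence $(w_i)_{i=1}^r$ of strings is a tower between languages $K$ and $L$ if $w_1\in K\cup L$ and for all $i=1,\dots,r-1$: $w_i\preccurlyeq w_{i+1}$, $w_i\in K$ implies $w_{i+1}\in L$, and $w_i\in L$ implies $w_{i+1}\in K$; $r$ is its height. An infinite tower is an infinite sequence with the same properties. *)

theory Defs
  imports Main "HOL-Library.Sublist"
begin

text \<open>Automata have state set {0..<n} (so exactly n states).\<close>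

record nfa =
  init :: "nat set"
  delta :: "nat \<Rightarrow> bool \<Rightarrow> nat set"
  final :: "nat set"

definition is_nfa :: "nat \<Rightarrow> nfa \<Rightarrow> bool" where
  "is_nfa n A \<longleftrightarrow> init A \<subseteq> {..<n} \<and> final A \<subseteq> {..<n}
      \<and> (\<forall>q<n. \<forall>a. delta A q a \<subseteq> {..<n})"

definition is_dfa :: "nat \<Rightarrow> nfa \<Rightarrow> bool" where
  "is_dfa n A \<longleftrightarrow> is_nfa n A \<and> card (init A) = 1
      \<and> (\<forall>q<n. \<forall>a. card (delta A q a) \<le> 1)"

fun reach :: "nfa \<Rightarrow> nat set \<Rightarrow> bool list \<Rightarrow> nat set" where
  "reach A S [] = S"
| "reach A S (a # w) = reach A (\<Union>q\<in>S. delta A q a) w"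

definition lang :: "nfa \<Rightarrow> bool list set" where
  "lang A = {w. reach A (init A) w \<inter> final A \<noteq> {}}"

text \<open>A (finite) tower between K and L; its height is the length of the list.\<close>
definition tower :: "'a list set \<Rightarrow> 'a list set \<Rightarrow> 'a list list \<Rightarrow> bool" where
  "tower K L ws \<longleftrightarrow> ws \<noteq> [] \<and> hd ws \<in> K \<union> L \<and>
     (\<forall>i. Suc i < length ws \<longrightarrow>
        subseq (ws ! i) (ws ! Suc i) \<and>
        (ws ! i \<in> K \<longrightarrow> ws ! Suc i \<in> L) \<and>
        (ws ! i \<in> L \<longrightarrow> ws ! Suc i \<in> K))"

definition infinite_tower :: "'a list set \<Rightarrow> 'a list set \<Rightarrow> (nat \<Rightarrow> 'a list) \<Rightarrow> bool" where
  "infinite_tower K L f \<longleftrightarrow> f 0 \<in> K \<union> L \<and>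
     (\<forall>i. subseq (f i) (f (Suc i)) \<and>
        (f i \<in> K \<longrightarrow> f (Suc i) \<in> L) \<and>
        (f i \<in> L \<longrightarrow> f (Suc i) \<in> K))"

end

theory Submission
  imports Defs
begin

definition AK :: "nat \<Rightarrow> nfa" where
  "AK n = \<lparr>init = {0},
     delta = (\<lambda>q x. if x then (if odd q \<and> q < n then {0,1} else {})
                     else (if q + 1 < n then {q+1} else {})),
     final = {q. odd q \<and> q < n}\<rparr>"

definition BL :: "nat \<Rightarrow> nfa" where
  "BL n = \<lparr>init = {0},
     delta = (\<lambda>q x. if x then (if q = 0 \<and> 2 < n then {2} else if 2 \<le> q \<and> q + 1 < n then {q+1} else {})
                     else (if q = 0 then {1} else if q = 1 then {0} else {q})),
     final = {q. q = 0 \<or> (2 \<le> q \<and> q < n)}\<rparr>"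

definition cnt :: "bool list \<Rightarrow> nat" where "cnt w = length (filter id w)"
definition lead :: "bool list \<Rightarrow> nat" where "lead w = length (takeWhile Not w)"

lemma reach_append: "reach A S (u @ v) = reach A (reach A S u) v"
  by (induction u arbitrary: S) auto

lemma reach_snoc: "reach A S (w @ [x]) = (\<Union>q\<in>reach A S w. delta A q x)"
  by (simp add: reach_append)

lemma reach_empty: "reach A {} w = {}"
  by (induction w) auto

lemma reach_Un: "reach A (S \<union> T) w = reach A S w \<union> reach A T w"
  by (induction w arbitrary: S T) (auto simp: UN_Un)

lemma lead_snoc: "lead (w @ [x]) = (if True \<in> set w then lead w else if x then length w else Suc (length w))"
proof -
  have "(\<forall>y\<in>set w. \<not> y) = (True \<notin> set w)" by auto
  then show ?thesis unfolding lead_def by (auto simp: takeWhile_append)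
qed

lemma filter_id_nil: "True \<notin> set w \<Longrightarrow> filter id w = []"
  by (induction w) auto

lemma invA:
  assumes "q \<in> reach (AK n) {0} w" "n > 0"
  shows "q < n \<and> length w \<le> n * cnt w + q \<and> (True \<notin> set w \<longrightarrow> q = length w)
         \<and> (True \<in> set w \<longrightarrow> odd (lead w))"
  using assms(1)
proof (induction w arbitrary: q rule: rev_induct)
  case Nil
  then show ?case using assms(2) by (simp add: AK_def cnt_def lead_def)
next
  case (snoc x w)
  from snoc.prems obtain p where p: "p \<in> reach (AK n) {0} w" and q: "q \<in> delta (AK n) p x"
    by (auto simp: reach_snoc)
  note IH = snoc.IH[OF p]
  show ?case
  proof (cases x)
    case True
    then have "odd p" "p < n" "q \<in> {0,1}" using q by (auto simp: AK_def split: if_splits)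
    moreover have "Suc 0 < n" using \<open>odd p\<close> \<open>p < n\<close> by (cases p) auto
    ultimately show ?thesis using IH True by (auto simp: cnt_def lead_snoc algebra_simps)
  next
    case False
    then have "q = p + 1" "p + 1 < n" using q by (auto simp: AK_def split: if_splits)
    then show ?thesis using IH False by (auto simp: cnt_def lead_snoc)
  qed
qed

lemma memK:
  assumes "w \<in> lang (AK n)" "n > 0"
  shows "odd (lead w) \<and> length w \<le> n * cnt w + (n - 1)"
proof -
  from assms obtain q where q: "q \<in> reach (AK n) {0} w" "odd q" "q < n"
    by (auto simp: lang_def AK_def)
  have "lead w = length w" if "True \<notin> set w"
  proof -
    have "\<forall>y\<in>set w. \<not> y" using that by auto
    then show ?thesis unfolding lead_def by (simp add: takeWhile_eq_all_conv[THEN iffD2])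
  qed
  then show ?thesis using invA[OF q(1) assms(2)] q by auto
qed

lemma invB:
  assumes "q \<in> reach (BL n) {0} w"
  shows "(True \<notin> set w \<and> q = (if even (length w) then 0 else 1)) \<or>
         (True \<in> set w \<and> even (lead w) \<and> q = cnt w + 1 \<and> 2 \<le> q \<and> q < n)"
  using assms
proof (induction w arbitrary: q rule: rev_induct)
  case Nil
  then show ?case by (simp add: BL_def)
next
  case (snoc x w)
  from snoc.prems obtain p where p: "p \<in> reach (BL n) {0} w" and q: "q \<in> delta (BL n) p x"
    by (auto simp: reach_snoc)
  note IH = snoc.IH[OF p]
  show ?case
  proof (cases x)
    case True
    then show ?thesis using IH q by (auto simp: BL_def cnt_def lead_snoc filter_id_nil split: if_splits)
  next
    case False
    then show ?thesis using IH q by (auto simp: BL_def cnt_def lead_snoc filter_id_nil Suc_le_eq split: if_splits)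
  qed
qed

lemma memL:
  assumes "w \<in> lang (BL n)" "2 \<le> n"
  shows "even (lead w) \<and> cnt w + 2 \<le> n"
proof -
  from assms obtain q where q: "q \<in> reach (BL n) {0} w" "q = 0 \<or> (2 \<le> q \<and> q < n)"
    by (auto simp: lang_def BL_def)
  have "lead w = length w \<and> cnt w = 0" if "True \<notin> set w"
  proof -
    have "\<forall>y\<in>set w. \<not> y" using that by auto
    then show ?thesis unfolding lead_def cnt_def
      by (simp add: takeWhile_eq_all_conv[THEN iffD2] filter_empty_conv)
  qed
  then show ?thesis using invB[OF q(1)] q assms(2) by (auto split: if_splits)
qed

lemma disjKL: "w \<in> lang (AK n) \<Longrightarrow> 2 \<le> n \<Longrightarrow> w \<notin> lang (BL n)"
  using memK memL by fastforce

lemma cnt_mono: "subseq u v \<Longrightarrow> cnt u \<le> cnt v"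
  unfolding cnt_def using subseq_filter list_emb_length by blast

lemma no_inf:
  assumes n2: "2 \<le> n"
  shows "\<not> (\<exists>f. infinite_tower (lang (AK n)) (lang (BL n)) f)"
proof
  assume "\<exists>f. infinite_tower (lang (AK n)) (lang (BL n)) f"
  then obtain f where T: "infinite_tower (lang (AK n)) (lang (BL n)) f" by blast
  let ?K = "lang (AK n)" and ?L = "lang (BL n)"
  have T0: "f 0 \<in> ?K \<union> ?L" and TS: "\<And>i. subseq (f i) (f (Suc i)) \<and>
        (f i \<in> ?K \<longrightarrow> f (Suc i) \<in> ?L) \<and> (f i \<in> ?L \<longrightarrow> f (Suc i) \<in> ?K)"
    using T unfolding infinite_tower_def by blast+
  have mem: "f i \<in> ?K \<union> ?L" for i
    by (induction i) (use T0 TS in auto)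
  have neq: "f i \<noteq> f (Suc i)" for i
    using mem[of i] TS[of i] disjKL[OF _ n2] by auto
  have lt: "length (f i) < length (f (Suc i))" for i
    using TS[of i] neq[of i] list_emb_length subseq_same_length
    by (metis le_neq_implies_less)
  have len: "i \<le> length (f i)" for i
  proof (induction i)
    case (Suc i) then show ?case using lt[of i] by simp
  qed simp
  have cntb: "cnt (f i) + 2 \<le> n" for i
  proof (cases "f i \<in> ?L")
    case True then show ?thesis using memL[OF _ n2] by blast
  next
    case False
    then have "f i \<in> ?K" using mem[of i] by blast
    then have "f (Suc i) \<in> ?L" using TS[of i] by blast
    then have "cnt (f (Suc i)) + 2 \<le> n" using memL[OF _ n2] by blast
    moreover have "cnt (f i) \<le> cnt (f (Suc i))" using TS[of i] cnt_mono by blast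
    ultimately show ?thesis by simp
  qed
  have Kbound: "length (f i) < n * n" if "f i \<in> ?K" for i
  proof -
    obtain m where m: "n = m + 2" using n2 by (metis add.commute le_Suc_ex)
    have "length (f i) \<le> n * cnt (f i) + (n - 1)" using memK[OF that] n2 by auto
    also have "n * cnt (f i) \<le> n * m" using cntb[of i] m by (intro mult_le_mono2) simp
    finally show ?thesis using m by (simp add: algebra_simps)
  qed
  have "f (n*n) \<in> ?K \<or> f (Suc (n*n)) \<in> ?K" using mem[of "n*n"] TS[of "n*n"] by blast
  then show False
    using Kbound[of "n*n"] Kbound[of "Suc (n*n)"] len[of "n*n"] len[of "Suc (n*n)"] by auto
qed

lemma is_nfa_AK: "2 \<le> n \<Longrightarrow> is_nfa n (AK n)"
  by (auto simp: is_nfa_def AK_def)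

lemma is_dfa_BL: "2 \<le> n \<Longrightarrow> is_dfa n (BL n)"
  by (auto simp: is_dfa_def is_nfa_def BL_def)

definition blk :: "nat \<Rightarrow> bool list" where "blk n = True # replicate (n - 1) False"
definition X :: "nat \<Rightarrow> nat \<Rightarrow> bool list" where "X n k = concat (replicate k (blk n))"
definition W :: "nat \<Rightarrow> nat \<Rightarrow> bool list" where
  "W n t = replicate (t mod n) False @ X n (t div n)"
definition wsT :: "nat \<Rightarrow> bool list list" where
  "wsT n = map (W n) [0..<n*(n-1)] @ [replicate n False @ X n (n - 2)]"

lemma X_Suc: "X n (Suc k) = blk n @ X n k"
  by (simp add: X_def)

lemma reachB_rep: "p \<in> {0,1} \<Longrightarrow>
   reach (BL n) {p} (replicate j False) = {if even j then p else 1 - p}"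
  by (induction j arbitrary: p) (auto simp: BL_def)

lemma reachB_rep2: "2 \<le> q \<Longrightarrow> reach (BL n) {q} (replicate j False) = {q}"
  by (induction j) (auto simp: BL_def)

lemma reachB_X: "2 \<le> q \<Longrightarrow> q + k < n \<Longrightarrow> reach (BL n) {q} (X n k) = {q + k}"
proof (induction k arbitrary: q)
  case 0 then show ?case by (simp add: X_def)
next
  case (Suc k)
  have "reach (BL n) {q} (blk n) = reach (BL n) {q+1} (replicate (n - 1) False)"
    using Suc.prems by (simp add: blk_def BL_def)
  then have "reach (BL n) {q} (blk n) = {q+1}"
    using Suc.prems by (simp add: reachB_rep2)
  then show ?case using Suc by (simp add: X_Suc reach_append)
qed

lemma reachB_X0: "k + 2 \<le> n \<Longrightarrow> reach (BL n) {0} (X n k) = {if k = 0 then 0 else k + 1}"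
proof (cases k)
  case 0 then show ?thesis by (simp add: X_def)
next
  case (Suc k')
  assume a: "k + 2 \<le> n"
  have "reach (BL n) {0} (blk n) = reach (BL n) {2} (replicate (n - 1) False)"
    using a Suc by (simp add: blk_def BL_def)
  then have "reach (BL n) {0} (blk n) = {2}"
    by (simp add: reachB_rep2)
  then show ?thesis using a Suc by (simp add: X_Suc reach_append reachB_X)
qed

lemma BL_simps: "init (BL n) = {0}" "final (BL n) = {q. q = 0 \<or> (2 \<le> q \<and> q < n)}"
  by (simp_all add: BL_def)

lemma AK_simps: "init (AK n) = {0}" "final (AK n) = {q. odd q \<and> q < n}"
  by (simp_all add: AK_def)

lemma W_L: "even j \<Longrightarrow> k + 2 \<le> n \<Longrightarrow> replicate j False @ X n k \<in> lang (BL n)"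
proof -
  assume a: "even j" "k + 2 \<le> n"
  have "reach (BL n) {0} (replicate j False) = {0}" using a by (simp add: reachB_rep)
  then have "reach (BL n) {0} (replicate j False @ X n k) = {if k = 0 then 0 else k + 1}"
    using a by (simp add: reach_append reachB_X0)
  then show ?thesis using a by (auto simp: lang_def BL_simps)
qed

lemma reachA_rep: "p < n \<Longrightarrow>
   reach (AK n) {p} (replicate j False) = (if p + j < n then {p + j} else {})"
proof (induction j arbitrary: p)
  case 0 then show ?case by simp
next
  case (Suc j)
  show ?case
  proof (cases "p + 1 < n")
    case True then show ?thesis using Suc.IH[of "p+1"] by (simp add: AK_def)
  next
    case False then show ?thesis by (simp add: AK_def reach_empty)
  qed
qed

lemma reachA_blk: "even n \<Longrightarrow> odd j \<Longrightarrow> j < n \<Longrightarrow> reach (AK n) {j} (blk n) = {n - 1}"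
proof -
  assume a: "even n" "odd j" "j < n"
  have j0: "j \<noteq> 0" using a(2) by (metis even_zero)
  have n1: "n \<noteq> 1" using a(1) by (metis odd_one)
  have n2: "2 \<le> n" using a(3) j0 n1 by linarith
  have "reach (AK n) {j} (blk n) = reach (AK n) ({0} \<union> {1}) (replicate (n - 1) False)"
    using a by (simp add: blk_def AK_def insert_commute)
  also have "\<dots> = reach (AK n) {0} (replicate (n - 1) False) \<union> reach (AK n) {1} (replicate (n - 1) False)"
    by (rule reach_Un)
  also have "\<dots> = {n - 1}" using n2 reachA_rep[of 0 n "n - 1"] reachA_rep[of 1 n "n - 1"] by simp
  finally show ?thesis .
qed

lemma reachA_X: "even n \<Longrightarrow> odd j \<Longrightarrow> j < n \<Longrightarrow>
   reach (AK n) {j} (X n k) = (if k = 0 then {j} else {n - 1})"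
proof (induction k arbitrary: j)
  case 0 then show ?case by (simp add: X_def)
next
  case (Suc k)
  have o: "odd (n - 1)" "n - 1 < n" using Suc.prems by (cases n; auto)+
  show ?case using Suc.prems Suc.IH[OF Suc.prems(1) o]
    by (simp add: X_Suc reach_append reachA_blk)
qed

lemma W_K: "even n \<Longrightarrow> odd j \<Longrightarrow> j < n \<Longrightarrow> replicate j False @ X n k \<in> lang (AK n)"
proof -
  assume a: "even n" "odd j" "j < n"
  have o: "odd (n - 1)" using a by (cases n; auto)
  have "reach (AK n) {0} (replicate j False @ X n k) = (if k = 0 then {j} else {n - 1})"
    using a by (simp add: reach_append reachA_rep reachA_X)
  then show ?thesis using a o by (auto simp: lang_def AK_def)
qed

lemma mod_parity: "even n \<Longrightarrow> even (t mod n) = even (t::nat)"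
  by (simp add: even_iff_mod_2_eq_zero mod_mod_cancel)

lemma W_step: "0 < n \<Longrightarrow> subseq (W n t) (W n (Suc t))"
proof (cases "Suc (t mod n) = n")
  case True
  assume n: "0 < n"
  have "Suc t mod n = 0" "Suc t div n = Suc (t div n)" using True by (simp_all add: mod_Suc div_Suc)
  moreover have "t mod n = n - 1" using True by simp
  ultimately show ?thesis by (auto simp: W_def X_Suc blk_def intro!: list_emb_Cons)
next
  case False
  have "Suc t mod n = Suc (t mod n)" "Suc t div n = t div n" using False by (simp_all add: mod_Suc div_Suc)
  then show ?thesis by (auto simp: W_def intro!: list_emb_Cons)
qed

lemma wsT_len: "length (wsT n) = n * (n - 1) + 1"
  by (simp add: wsT_def)

lemma wsT_nth1: "i < n * (n - 1) \<Longrightarrow> wsT n ! i = W n i"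
  by (simp add: wsT_def nth_append)

lemma wsT_nth2: "wsT n ! (n * (n - 1)) = replicate n False @ X n (n - 2)"
  by (simp add: wsT_def nth_append)

lemma wsT_mem:
  assumes ev: "even n" and n0: "0 < n" and i: "i < length (wsT n)"
  shows "(even i \<longrightarrow> wsT n ! i \<in> lang (BL n)) \<and> (odd i \<longrightarrow> wsT n ! i \<in> lang (AK n))"
proof (cases "i < n * (n - 1)")
  case True
  have d: "i div n < n - 1" using True by (simp add: less_mult_imp_div_less mult.commute)
  have m: "i mod n < n" using n0 by simp
  have p: "even (i mod n) = even i" using ev by (rule mod_parity)
  show ?thesis unfolding wsT_nth1[OF True] W_def
    using W_L[of "i mod n" "i div n" n] W_K[OF ev _ m, of "i div n"] p d by auto
next
  case False
  then have i2: "i = n * (n - 1)" using i wsT_len[of n] by simp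
  have "even i" using ev i2 by simp
  moreover have "wsT n ! i \<in> lang (BL n)"
    unfolding i2 wsT_nth2 using ev n0 by (intro W_L; presburger)
  ultimately show ?thesis by simp
qed

lemma wsT_sub:
  assumes ev: "even n" and n0: "0 < n" and i: "Suc i < length (wsT n)"
  shows "subseq (wsT n ! i) (wsT n ! Suc i)"
proof (cases "Suc i < n * (n - 1)")
  case True
  then show ?thesis using W_step[OF n0, of i] by (simp add: wsT_nth1)
next
  case False
  then have i2: "Suc i = n * (n - 1)" using i wsT_len[of n] by simp
  have m0: "Suc i mod n = 0" using i2 by simp
  then have mi: "Suc (i mod n) = n" by (metis mod_Suc nat.distinct(1))
  have "Suc i div n = n - 1" using i2 n0 by simp
  then have di: "i div n = n - 2" using m0 by (simp add: div_Suc)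
  have il: "i < n * (n - 1)" using i2 by simp
  have "wsT n ! i = replicate (n - 1) False @ X n (n - 2)"
    using mi di by (simp add: wsT_nth1[OF il] W_def)
  moreover have "wsT n ! Suc i = False # (replicate (n - 1) False @ X n (n - 2))"
    using i2 n0 wsT_nth2[of n] by (cases n) auto
  ultimately show ?thesis by (auto intro!: list_emb_Cons)
qed

lemma wsT_tower:
  assumes ev: "even n" and n0: "0 < n"
  shows "tower (lang (AK n)) (lang (BL n)) (wsT n)"
proof -
  have n2: "2 \<le> n" using ev n0 by presburger
  have ne: "wsT n \<noteq> []" by (simp add: wsT_def)
  have "hd (wsT n) = wsT n ! 0" using ne by (simp add: hd_conv_nth)
  then have hd: "hd (wsT n) \<in> lang (BL n)" using wsT_mem[OF ev n0, of 0] ne by simp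
  have step: "(wsT n ! i \<in> lang (AK n) \<longrightarrow> wsT n ! Suc i \<in> lang (BL n)) \<and>
              (wsT n ! i \<in> lang (BL n) \<longrightarrow> wsT n ! Suc i \<in> lang (AK n))"
    if si: "Suc i < length (wsT n)" for i
  proof -
    have a: "(even i \<longrightarrow> wsT n ! i \<in> lang (BL n)) \<and> (odd i \<longrightarrow> wsT n ! i \<in> lang (AK n))"
      using wsT_mem[OF ev n0, of i] si by simp
    have b: "(even (Suc i) \<longrightarrow> wsT n ! Suc i \<in> lang (BL n)) \<and> (odd (Suc i) \<longrightarrow> wsT n ! Suc i \<in> lang (AK n))"
      using wsT_mem[OF ev n0 si] by simp
    show ?thesis using a b disjKL[OF _ n2] by auto
  qed
  show ?thesis unfolding tower_def using ne hd step wsT_sub[OF ev n0] by blast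
qed

theorem theorem8:
  fixes n :: nat
  assumes "even n" and "n > 0"
  shows "\<exists>A B. is_nfa n A \<and> is_dfa n B \<and>
           (\<exists>ws. tower (lang A) (lang B) ws \<and> length ws = n^2 - n + 1) \<and>
           \<not> (\<exists>f. infinite_tower (lang A) (lang B) f)"
proof -
  have n2: "2 \<le> n" using assms by presburger
  have "length (wsT n) = n^2 - n + 1"
    by (simp add: wsT_len power2_eq_square diff_mult_distrib2)
  then show ?thesis
    using is_nfa_AK[OF n2] is_dfa_BL[OF n2] wsT_tower[OF assms] no_inf[OF n2] by blast
qed

end
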